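(* Let $d\ge1$ be odd. In $\mathbb Q[l_1,l_2]$ (with $c_1=-(l_1+l_2)$, $c_2=l_1l_2$) the following identities hold: $$P_d=\Big(d^2c_2-\tfrac{d^2-1}{4}c_1^2\Big)P_{d-2},\quad R_{0,0}=\tfrac{d+1}{2}c_1\,P_{d-2},\quad R_{0,1}=-d\,P_{d-2},\quad R_{1,0}=d\,c_2\,P_{d-2},\quad R_{1,1}=\tfrac{1-d}{2}c_1\,P_{d-2}.$$
   Context: For $n\ge0$ let $P_{0,n}(X)=\prod_{j=0}^{n}\big(X+(n-j)l_1+jl_2\big)\in\mathbb Z[l_1,l_2][X]$, and set $P_{0,-1}:=1$. Put $c_1=-(l_1+l_2)$, $c_2=l_1l_2$, $P_d:=P_{0,d}\big(\tfrac{d+1}{2}c_1\big)$ and $P_{d-2}:=P_{0,d-2}\big(\tfrac{d-1}{2}c_1\big)$ (so $P_{-1}=1$). For $k=0,1$, divide $h^k\,P_{0,d-1}(H-h)\in\mathbb Z[l_1,l_2][H,h]$ by the monic polynomial $h^2-c_1h+c_2$ in $h$, obtaining the remainder $R_{k,0}(H)+R_{k,1}(H)\,h$ with $R_{k,j}(H)\in\mathbb Z[l_1,l_2][H]$; then define $R_{k,j}:=R_{k,j}\big(\tfrac{d+1}{2}c_1\big)$. *)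

theory Defs
  imports "HOL-Computational_Algebra.Polynomial"
begin

definition P0 :: "'a::comm_ring_1 \<Rightarrow> 'a \<Rightarrow> int \<Rightarrow> 'a \<Rightarrow> 'a" where
  "P0 l1 l2 n X = (if n < 0 then 1
     else (\<Prod>j\<in>{0..nat n}. X + of_int (n - int j) * l1 + of_nat j * l2))"

definition c1 :: "'a::comm_ring_1 \<Rightarrow> 'a \<Rightarrow> 'a" where
  "c1 l1 l2 = - (l1 + l2)"

definition c2 :: "'a::comm_ring_1 \<Rightarrow> 'a \<Rightarrow> 'a" where
  "c2 l1 l2 = l1 * l2"

text \<open>R_{k,j}(H): coefficient of h^j in the remainder of h^k * P_{0,d-1}(H - h) upon division
  by the monic polynomial h^2 - c1 h + c2 in the variable h, for a given value of H.\<close>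
definition Rkj :: "'a::field \<Rightarrow> 'a \<Rightarrow> nat \<Rightarrow> nat \<Rightarrow> nat \<Rightarrow> 'a \<Rightarrow> 'a" where
  "Rkj l1 l2 d k j H =
     coeff ((monom 1 k * P0 [:l1:] [:l2:] (int d - 1) [:H, -1:])
            mod [:c2 l1 l2, - c1 l1 l2, 1:]) j"

end

theory Submission
  imports Defs
begin

lemma P0_step:
  fixes l1 l2 X :: "'a::comm_ring_1"
  assumes "N = int n + 2"
  shows "P0 l1 l2 N X = (X + of_nat (n+2) * l1) * (X + of_nat (n+2) * l2) * P0 l1 l2 (int n) (X + l1 + l2)"
proof -
  define f where "f j = X + of_int (int n + 2 - int j) * l1 + of_nat j * l2" for j
  have "P0 l1 l2 N X = (\<Prod>j\<in>{0..Suc (Suc n)}. f j)"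
    using assms by (simp add: P0_def f_def nat_add_distrib)
  also have "\<dots> = f 0 * (\<Prod>j\<in>{0..n}. f (Suc j)) * f (Suc (Suc n))"
    by (subst prod.atLeast0_atMost_Suc, subst prod.atLeast0_atMost_Suc_shift) (simp add: comp_def)
  also have "(\<Prod>j\<in>{0..n}. f (Suc j)) = P0 l1 l2 (int n) (X + l1 + l2)"
    unfolding P0_def f_def by (auto intro!: prod.cong simp: algebra_simps)
  finally show ?thesis by (simp add: f_def algebra_simps)
qed

definition gg :: "'a::comm_ring_1 \<Rightarrow> 'a \<Rightarrow> nat \<Rightarrow> 'a" where
  "gg l1 l2 m = of_nat ((2*m+1)^2) * c2 l1 l2 - of_nat (m*(m+1)) * (c1 l1 l2)^2"

lemma Pd_rec:
  fixes l1 l2 :: "'a::comm_ring_1"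
  shows "P0 l1 l2 (int (2*m+1)) (of_nat (m+1) * c1 l1 l2)
     = gg l1 l2 m * P0 l1 l2 (int (2*m) - 1) (of_nat m * c1 l1 l2)"
proof (cases m)
  case 0
  then show ?thesis
    by (simp add: P0_def gg_def c1_def c2_def atLeast0_atMost_Suc algebra_simps power2_eq_square)
next
  case (Suc k)
  have "P0 l1 l2 (int (2*m+1)) (of_nat (m+1) * c1 l1 l2)
     = (of_nat (m+1) * c1 l1 l2 + of_nat (2*k+1+2) * l1) * (of_nat (m+1) * c1 l1 l2 + of_nat (2*k+1+2) * l2)
       * P0 l1 l2 (int (2*k+1)) (of_nat (m+1) * c1 l1 l2 + l1 + l2)"
    by (rule P0_step) (simp add: Suc)
  also have "of_nat (m+1) * c1 l1 l2 + l1 + l2 = of_nat m * c1 l1 l2"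
    by (simp add: c1_def algebra_simps)
  also have "int (2*k+1) = int (2*m) - 1" using Suc by simp
  also have "(of_nat (m+1) * c1 l1 l2 + of_nat (2*k+1+2) * l1) * (of_nat (m+1) * c1 l1 l2 + of_nat (2*k+1+2) * l2)
     = gg l1 l2 m"
    by (simp add: Suc gg_def c1_def c2_def algebra_simps power2_eq_square)
  finally show ?thesis .
qed

definition DD :: "'a::field \<Rightarrow> 'a \<Rightarrow> 'a poly" where
  "DD l1 l2 = [:c2 l1 l2, - c1 l1 l2, 1:]"

definition QQ :: "'a::field \<Rightarrow> 'a \<Rightarrow> nat \<Rightarrow> 'a poly" where
  "QQ l1 l2 m = P0 [:l1:] [:l2:] (int (2*m)) [:of_nat (m+1) * c1 l1 l2, -1:]"

definition PP :: "'a::field \<Rightarrow> 'a \<Rightarrow> nat \<Rightarrow> 'a" where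
  "PP l1 l2 m = P0 l1 l2 (int (2*m) - 1) (of_nat m * c1 l1 l2)"

definition VV :: "'a::field \<Rightarrow> 'a \<Rightarrow> nat \<Rightarrow> 'a poly" where
  "VV l1 l2 m = [:of_nat (m+1) * c1 l1 l2, - of_nat (2*m+1):]"

lemma key_identity:
  fixes l1 l2 :: "'a::field_char_0"
  shows "([:of_nat (m+2) * c1 l1 l2, -1:] + of_nat (2*m+2) * [:l1:]) * ([:of_nat (m+2) * c1 l1 l2, -1:] + of_nat (2*m+2) * [:l2:]) * VV l1 l2 m
     - smult (gg l1 l2 m) (VV l1 l2 (Suc m))
     = DD l1 l2 * [:of_nat (m+1) * c1 l1 l2 - of_nat (2*m+1) * (l1 + l2), - of_nat (2*m+1):]"
proof -
  have "poly (([:of_nat (m+2) * c1 l1 l2, -1:] + of_nat (2*m+2) * [:l1:]) * ([:of_nat (m+2) * c1 l1 l2, -1:] + of_nat (2*m+2) * [:l2:]) * VV l1 l2 m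
     - smult (gg l1 l2 m) (VV l1 l2 (Suc m))) x
     = poly (DD l1 l2 * [:of_nat (m+1) * c1 l1 l2 - of_nat (2*m+1) * (l1 + l2), - of_nat (2*m+1):]) x" for x
    by (simp add: VV_def DD_def gg_def c1_def c2_def algebra_simps power2_eq_square)
  then show ?thesis using poly_eq_poly_eq_iff by blast
qed

lemma QQ_dvd:
  fixes l1 l2 :: "'a::field_char_0"
  shows "DD l1 l2 dvd (QQ l1 l2 m - smult (PP l1 l2 m) (VV l1 l2 m))"
proof (induction m)
  case 0
  then show ?case by (simp add: QQ_def PP_def VV_def P0_def)
next
  case (Suc m)
  define F where "F = ([:of_nat (m+2) * c1 l1 l2, -1:] + of_nat (2*m+2) * [:l1:]) * ([:of_nat (m+2) * c1 l1 l2, -1:] + of_nat (2*m+2) * [:l2:])"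
  have Q: "QQ l1 l2 (Suc m) = F * QQ l1 l2 m"
  proof -
    have "QQ l1 l2 (Suc m) = ([:of_nat (Suc m+1) * c1 l1 l2, -1:] + of_nat (2*m+2) * [:l1:]) * ([:of_nat (Suc m+1) * c1 l1 l2, -1:] + of_nat (2*m+2) * [:l2:])
       * P0 [:l1:] [:l2:] (int (2*m)) ([:of_nat (Suc m+1) * c1 l1 l2, -1:] + [:l1:] + [:l2:])"
      unfolding QQ_def by (rule P0_step) simp
    also have "[:of_nat (Suc m+1) * c1 l1 l2, -1:] + [:l1:] + [:l2:] = [:of_nat (m+1) * c1 l1 l2, -1:]"
      by (simp add: c1_def algebra_simps)
    finally show ?thesis by (simp add: F_def QQ_def)
  qed
  have P: "PP l1 l2 (Suc m) = gg l1 l2 m * PP l1 l2 m"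
    using Pd_rec[of l1 l2 m] by (simp add: PP_def)
  have "QQ l1 l2 (Suc m) - smult (PP l1 l2 (Suc m)) (VV l1 l2 (Suc m))
     = F * (QQ l1 l2 m - smult (PP l1 l2 m) (VV l1 l2 m))
       + smult (PP l1 l2 m) (F * VV l1 l2 m - smult (gg l1 l2 m) (VV l1 l2 (Suc m)))"
    by (simp add: Q P algebra_simps smult_add_right smult_diff_right)
  moreover have "DD l1 l2 dvd F * VV l1 l2 m - smult (gg l1 l2 m) (VV l1 l2 (Suc m))"
    unfolding F_def key_identity by (rule dvd_triv_left)
  ultimately show ?case using Suc.IH
    by (metis dvd_add dvd_mult dvd_smult)
qed

lemma mod_DD:
  fixes l1 l2 :: "'a::field_char_0"
  assumes "DD l1 l2 dvd (p - r)" "degree r < 2"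
  shows "p mod DD l1 l2 = r"
proof -
  have "p mod DD l1 l2 = r mod DD l1 l2" using assms(1) by (simp add: mod_eq_dvd_iff)
  also have "\<dots> = r" by (rule mod_poly_less) (use assms(2) in \<open>simp add: DD_def\<close>)
  finally show ?thesis .
qed

lemma QQ_mod0:
  fixes l1 l2 :: "'a::field_char_0"
  shows "(monom 1 0 * QQ l1 l2 m) mod DD l1 l2 = smult (PP l1 l2 m) (VV l1 l2 m)"
  by (rule mod_DD) (use QQ_dvd[of l1 l2 m] in \<open>auto simp: VV_def\<close>)

lemma QQ_mod1:
  fixes l1 l2 :: "'a::field_char_0"
  shows "(monom 1 1 * QQ l1 l2 m) mod DD l1 l2 =
     [:PP l1 l2 m * of_nat (2*m+1) * c2 l1 l2, PP l1 l2 m * (of_nat (m+1) * c1 l1 l2 - of_nat (2*m+1) * c1 l1 l2):]"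
    (is "_ = ?r")
proof (rule mod_DD)
  have e: "monom 1 1 * smult (PP l1 l2 m) (VV l1 l2 m) - ?r = smult (- PP l1 l2 m * of_nat (2*m+1)) (DD l1 l2)"
  proof -
    have "poly (monom 1 1 * smult (PP l1 l2 m) (VV l1 l2 m) - ?r) x = poly (smult (- PP l1 l2 m * of_nat (2*m+1)) (DD l1 l2)) x" for x
      by (simp add: VV_def DD_def poly_monom algebra_simps power2_eq_square)
    then show ?thesis using poly_eq_poly_eq_iff by blast
  qed
  have "monom 1 1 * QQ l1 l2 m - ?r = monom 1 1 * (QQ l1 l2 m - smult (PP l1 l2 m) (VV l1 l2 m))
     + (monom 1 1 * smult (PP l1 l2 m) (VV l1 l2 m) - ?r)" by (simp add: algebra_simps)
  also have "\<dots> = monom 1 1 * (QQ l1 l2 m - smult (PP l1 l2 m) (VV l1 l2 m)) + smult (- PP l1 l2 m * of_nat (2*m+1)) (DD l1 l2)"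
    using e by simp
  finally show "DD l1 l2 dvd monom 1 1 * QQ l1 l2 m - ?r"
    using QQ_dvd[of l1 l2 m] by (metis dvd_add dvd_mult dvd_smult dvd_refl)
  show "degree ?r < 2" by simp
qed

theorem mainTheorem10:
  fixes l1 l2 :: "'a::field_char_0" and d :: nat
  assumes "odd d"
  shows "P0 l1 l2 (int d) (of_nat (d + 1) / 2 * c1 l1 l2)
           = (of_nat (d^2) * c2 l1 l2 - (of_nat (d^2) - 1) / 4 * (c1 l1 l2)^2)
             * P0 l1 l2 (int d - 2) (of_nat (d - 1) / 2 * c1 l1 l2)
       \<and> Rkj l1 l2 d 0 0 (of_nat (d + 1) / 2 * c1 l1 l2)
           = of_nat (d + 1) / 2 * c1 l1 l2 * P0 l1 l2 (int d - 2) (of_nat (d - 1) / 2 * c1 l1 l2)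
       \<and> Rkj l1 l2 d 0 1 (of_nat (d + 1) / 2 * c1 l1 l2)
           = - of_nat d * P0 l1 l2 (int d - 2) (of_nat (d - 1) / 2 * c1 l1 l2)
       \<and> Rkj l1 l2 d 1 0 (of_nat (d + 1) / 2 * c1 l1 l2)
           = of_nat d * c2 l1 l2 * P0 l1 l2 (int d - 2) (of_nat (d - 1) / 2 * c1 l1 l2)
       \<and> Rkj l1 l2 d 1 1 (of_nat (d + 1) / 2 * c1 l1 l2)
           = (1 - of_nat d) / 2 * c1 l1 l2 * P0 l1 l2 (int d - 2) (of_nat (d - 1) / 2 * c1 l1 l2)"
proof -
  obtain m where d: "d = 2*m+1" using assms oddE by blast
  have hH: "of_nat (d + 1) / 2 * c1 l1 l2 = (of_nat (m+1) * c1 l1 l2 :: 'a)"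
    by (simp add: d field_simps)
  have hP: "P0 l1 l2 (int d - 2) (of_nat (d - 1) / 2 * c1 l1 l2) = PP l1 l2 m"
    by (simp add: d PP_def)
  have hR: "Rkj l1 l2 d k j (of_nat (d + 1) / 2 * c1 l1 l2) = coeff ((monom 1 k * QQ l1 l2 m) mod DD l1 l2) j" for k j
    unfolding Rkj_def hH by (simp add: QQ_def DD_def d)
  have h1: "P0 l1 l2 (int d) (of_nat (d + 1) / 2 * c1 l1 l2) = gg l1 l2 m * PP l1 l2 m"
    unfolding hH using Pd_rec[of l1 l2 m] by (simp add: d PP_def)
  have h2: "gg l1 l2 m = of_nat (d^2) * c2 l1 l2 - (of_nat (d^2) - 1) / 4 * (c1 l1 l2)^2"
    by (simp add: gg_def d field_simps power2_eq_square)
  show ?thesis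
    unfolding hP hR h1 h2 QQ_mod0 QQ_mod1
    by (simp add: VV_def d field_simps)
qed

end
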